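(* Let $q$ be a positive integer and $\lambda$ be a partition. Then \[c^{(q)}_\lambda=\left|\mathscr{W}^{(q)}_{r(\lambda)}\right|\cdot\frac{\prod_{i=0}^{q-1}r_i(\lambda)!}{\prod_{s\geq1}n_s(\lambda)!}\cdot\binom{\ell(\lambda)-1}{r_0(\lambda)}.\] In particular, $c^{(q)}_\lambda\neq0$ if and only if $\mathscr{W}^{(q)}_{r(\lambda)}\neq\emptyset$.
   Context: A composition of $n\in\mathbb{N}_0$ is a finite sequence $\delta=(\delta_1,\ldots,\delta_s)$ of positive integers with $\sum_i\delta_i=n$; write $\ell(\delta)=s$, $|\delta|=n$; the unique composition of $0$ is the empty composition. A partition is a composition with $\delta_1\geq\cdots\geq\delta_s$. Partial sums: $\delta^+_j=\sum_{i=1}^j\delta_i$. For a positive integer $d$, $n_d(\delta)=|\{i:\delta_i=d\}|$. For a positive integer $q$, a composition $\delta$ is called $q'$-cumulative if it is nonempty and $q\nmid\delta^+_j$ for all $1\leq j\leq\ell(\delta)$ (the empty composition is not regarded as $q'$-cumulative). For a partition $\lambda$, $\mathscr{C}(\lambda)$ is the set of compositions that are rearrangements of $\lambda$, and $c^{(q)}_\lambda$ is the number of $q'$-cumulative $\delta\in\mathscr{C}(\lambda)$. For $0\leq j\leq q-1$, $r_j(\delta)=\sum_{i\equiv j\,(\mathrm{mod}\ q)}n_i(\delta)$, and $r(\delta)=(r_1(\delta),\ldots,r_{q-1}(\delta))\in\mathbb{N}_0^{q-1}$. For $\mathbf{r}=(r_1,\ldots,r_{q-1})\in\mathbb{N}_0^{q-1}$,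 let $\mu$ be the partition $((q-1)^{r_{q-1}},\ldots,2^{r_2},1^{r_1})$ (having $r_i$ parts equal to $i$) and $\mathscr{W}^{(q)}_{\mathbf{r}}=\{\delta\in\mathscr{C}(\mu):\delta\text{ is }q'\text{-cumulative}\}$. The binomial coefficient $\binom{m}{k}$ is $0$ when $k>m\ge 0$. *)

theory Defs
  imports Complex_Main "HOL-Library.Multiset"
begin

definition is_composition :: "nat list \<Rightarrow> bool" where
  "is_composition \<delta> \<longleftrightarrow> 0 \<notin> set \<delta>"

definition is_partition :: "nat list \<Rightarrow> bool" where
  "is_partition lam \<longleftrightarrow> is_composition lam \<and> sorted_wrt (\<ge>) lam"

definition psum :: "nat list \<Rightarrow> nat \<Rightarrow> nat" where
  "psum \<delta> j = sum_list (take j \<delta>)"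

definition nmult :: "nat \<Rightarrow> nat list \<Rightarrow> nat" where
  "nmult d \<delta> = count (mset \<delta>) d"

definition q_cumulative :: "nat \<Rightarrow> nat list \<Rightarrow> bool" where
  "q_cumulative q \<delta> \<longleftrightarrow> \<delta> \<noteq> [] \<and> (\<forall>j\<in>{1..length \<delta>}. \<not> q dvd psum \<delta> j)"

definition rearr :: "nat list \<Rightarrow> nat list set" where
  "rearr lam = {\<delta>. mset \<delta> = mset lam}"

definition c_count :: "nat \<Rightarrow> nat list \<Rightarrow> nat" where
  "c_count q lam = card {\<delta> \<in> rearr lam. q_cumulative q \<delta>}"

definition rj :: "nat \<Rightarrow> nat \<Rightarrow> nat list \<Rightarrow> nat" where
  "rj q j \<delta> = (\<Sum>i\<in>{i\<in>set \<delta>. i mod q = j mod q}. nmult i \<delta>)"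

text \<open>the vector r(delta) in N^(q-1), represented as a function on indices 1..q-1\<close>
definition rvec :: "nat \<Rightarrow> nat list \<Rightarrow> nat \<Rightarrow> nat" where
  "rvec q \<delta> = (\<lambda>j. if 1 \<le> j \<and> j \<le> q - 1 then rj q j \<delta> else 0)"

definition mu_of :: "nat \<Rightarrow> (nat \<Rightarrow> nat) \<Rightarrow> nat multiset" where
  "mu_of q r = (\<Sum>i\<in>{1..q-1}. replicate_mset (r i) i)"

definition W_set :: "nat \<Rightarrow> (nat \<Rightarrow> nat) \<Rightarrow> nat list set" where
  "W_set q r = {\<delta>. mset \<delta> = mu_of q r \<and> q_cumulative q \<delta>}"

end

theory Submission imports Defs "HOL-Combinatorics.Multiset_Permutations" begin

lemma fiber_le:
  assumes v: "mset v = image_mset g N" and v': "mset v' = image_mset g N"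
  shows "card {w. mset w = N \<and> map g w = v} \<le> card {w. mset w = N \<and> map g w = v'}"
proof -
  have "mset v' = mset v" using v v' by simp
  then obtain p where p: "p permutes {..<length v}" "permute_list p v = v'"
    by (rule mset_eq_permutation)
  let ?f = "permute_list p"
  have fin: "finite {w. mset w = N \<and> map g w = v'}"
    by (rule finite_subset[of _ "permutations_of_multiset N"]) (auto intro: permutations_of_multisetI)
  show ?thesis
  proof (rule card_inj_on_le[OF _ _ fin])
    show "inj_on ?f {w. mset w = N \<and> map g w = v}"
    proof (rule inj_onI)
      fix w1 w2 assume w1: "w1 \<in> {w. mset w = N \<and> map g w = v}" and w2: "w2 \<in> {w. mset w = N \<and> map g w = v}"
        and eq: "?f w1 = ?f w2"
      have l1: "length w1 = length v" and l2: "length w2 = length v" using w1 w2 by (auto dest: mset_eq_length)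
      have pi: "inv p permutes {..<length v}" using p(1) by (rule permutes_inv)
      have "permute_list (p \<circ> inv p) w1 = permute_list (inv p) (?f w1)"
        using permute_list_compose[of "inv p" w1 p] pi l1 by simp
      moreover have "permute_list (p \<circ> inv p) w2 = permute_list (inv p) (?f w2)"
        using permute_list_compose[of "inv p" w2 p] pi l2 by simp
      moreover have "p \<circ> inv p = id" using p(1) by (rule permutes_inv_o)
      ultimately show "w1 = w2" using eq by simp
    qed
    show "?f ` {w. mset w = N \<and> map g w = v} \<subseteq> {w. mset w = N \<and> map g w = v'}"
    proof (rule image_subsetI)
      fix w assume "w \<in> {w. mset w = N \<and> map g w = v}"
      then have w: "map g w = v" "mset w = N" by auto
      then have l: "length w = length v" by auto
      have "mset (?f w) = mset w" using p(1) l by (simp add: mset_permute_list)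
      moreover have "map g (?f w) = v'"
        using permute_list_map[of p w g] p l w by simp
      ultimately show "?f w \<in> {w. mset w = N \<and> map g w = v'}" using w by simp
    qed
  qed
qed


definition PF :: "'a multiset \<Rightarrow> nat" where
  "PF A = (\<Prod>x\<in>set_mset A. fact (count A x))"

lemma fiber_card_UN:
  assumes "\<And>v. v \<in> V \<Longrightarrow> card {w. mset w = N \<and> map g w = v} = K" and "finite V"
  shows "card (\<Union>v\<in>V. {w. mset w = N \<and> map g w = v}) = card V * K"
proof -
  have "card (\<Union>v\<in>V. {w. mset w = N \<and> map g w = v}) = (\<Sum>v\<in>V. card {w. mset w = N \<and> map g w = v})"
  proof (rule card_UN_disjoint[OF assms(2)])
    show "\<forall>i\<in>V. finite {w. mset w = N \<and> map g w = i}"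
      by (auto intro: finite_subset[of _ "permutations_of_multiset N"] permutations_of_multisetI)
  qed auto
  also have "\<dots> = card V * K" using assms(1) by simp
  finally show ?thesis .
qed

lemma fiber_count:
  "card {w. mset w = N \<and> P (map g w)} * PF N = card {v. mset v = image_mset g N \<and> P v} * PF (image_mset g N)"
proof -
  let ?F = "\<lambda>v. {w. mset w = N \<and> map g w = v}"
  let ?V = "permutations_of_multiset (image_mset g N)"
  obtain v0 where v0: "v0 \<in> ?V" using permutations_of_multiset_not_empty by blast
  define K where "K = card (?F v0)"
  have K: "card (?F v) = K" if "v \<in> ?V" for v
    using fiber_le[of v g N v0] fiber_le[of v0 g N v] that v0 unfolding K_def
    by (metis (no_types, lifting) antisym permutations_of_multisetD)
  have e1: "{w. mset w = N \<and> P (map g w)} = (\<Union>v\<in>{v\<in>?V. P v}. ?F v)"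
    by (auto intro!: permutations_of_multisetI)
  have e2: "permutations_of_multiset N = (\<Union>v\<in>?V. ?F v)"
    by (auto intro!: permutations_of_multisetI simp: permutations_of_multiset_def)
  have c1: "card {w. mset w = N \<and> P (map g w)} = card {v\<in>?V. P v} * K"
    unfolding e1 by (rule fiber_card_UN) (auto intro: K)
  have c2: "card (permutations_of_multiset N) = card ?V * K"
    unfolding e2 by (rule fiber_card_UN) (auto intro: K)
  have a1: "card (permutations_of_multiset N) * PF N = fact (size N)"
    unfolding PF_def by (rule card_permutations_of_multiset_aux)
  have a2: "card ?V * PF (image_mset g N) = fact (size N)"
    unfolding PF_def using card_permutations_of_multiset_aux[of "image_mset g N"] by simp
  have pos: "card ?V > 0" using v0 by (simp add: card_gt_0_iff)
  have "card ?V * (K * PF N) = card ?V * PF (image_mset g N)" using a1 a2 c2 by (simp add: ac_simps)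
  then have KP: "K * PF N = PF (image_mset g N)" using pos by simp
  have "{v\<in>?V. P v} = {v. mset v = image_mset g N \<and> P v}"
    by (auto intro: permutations_of_multisetI dest: permutations_of_multisetD)
  then show ?thesis using c1 KP by (simp add: ac_simps)
qed


fun ok :: "nat \<Rightarrow> nat \<Rightarrow> nat list \<Rightarrow> bool" where
  "ok q s [] = True"
| "ok q s (x#xs) = (\<not> q dvd (s+x) \<and> ok q (s+x) xs)"

lemma psum_Cons: "psum (x#xs) (Suc j) = x + psum xs j"
  by (simp add: psum_def)

lemma ok_psum: "ok q s v \<longleftrightarrow> (\<forall>j\<in>{1..length v}. \<not> q dvd (s + psum v j))"
proof (induction v arbitrary: s)
  case Nil
  then show ?case by simp
next
  case (Cons x xs)
  have "(\<forall>j\<in>{1..length (x#xs)}. \<not> q dvd (s + psum (x#xs) j)) \<longleftrightarrow>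
        (\<not> q dvd (s + x) \<and> (\<forall>j\<in>{1..length xs}. \<not> q dvd (s + x + psum xs j)))"
  proof
    assume H: "\<forall>j\<in>{1..length (x#xs)}. \<not> q dvd (s + psum (x#xs) j)"
    have "\<not> q dvd (s + psum (x#xs) (Suc 0))" using H by auto
    moreover have "\<not> q dvd (s + psum (x#xs) (Suc j))" if "j \<in> {1..length xs}" for j
      using H that by auto
    ultimately show "\<not> q dvd (s + x) \<and> (\<forall>j\<in>{1..length xs}. \<not> q dvd (s + x + psum xs j))"
      by (auto simp: psum_Cons psum_def add.assoc)
  next
    assume H: "\<not> q dvd (s + x) \<and> (\<forall>j\<in>{1..length xs}. \<not> q dvd (s + x + psum xs j))"
    show "\<forall>j\<in>{1..length (x#xs)}. \<not> q dvd (s + psum (x#xs) j)"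
    proof
      fix j assume j: "j \<in> {1..length (x#xs)}"
      then obtain j' where j': "j = Suc j'" by (cases j) auto
      show "\<not> q dvd (s + psum (x#xs) j)"
      proof (cases j')
        case 0 then show ?thesis using H j' by (simp add: psum_def)
      next
        case (Suc j'')
        then have "j' \<in> {1..length xs}" using j j' by auto
        then show ?thesis using H j' by (simp add: psum_Cons add.assoc)
      qed
    qed
  qed
  then show ?case using Cons.IH[of "s+x"] by simp
qed

lemma cum_ok: "q_cumulative q v \<longleftrightarrow> v \<noteq> [] \<and> ok q 0 v"
  unfolding q_cumulative_def using ok_psum[of q 0 v] by simp

lemma ok_cong:
  "s mod q = s' mod q \<Longrightarrow> map (\<lambda>x. x mod q) v = map (\<lambda>x. x mod q) w \<Longrightarrow> ok q s v = ok q s' w"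
proof (induction v arbitrary: s s' w)
  case Nil
  then show ?case by simp
next
  case (Cons x xs)
  then obtain y ys where w: "w = y # ys" by (cases w) auto
  have e: "(s + x) mod q = (s' + y) mod q"
    using Cons.prems w by (metis list.inject list.simps(9) mod_add_cong)
  have "ok q (s+x) xs = ok q (s'+y) ys" using Cons.IH[OF e] Cons.prems w by simp
  moreover have "q dvd (s+x) \<longleftrightarrow> q dvd (s'+y)" using e by (simp add: mod_eq_0_iff_dvd[symmetric])
  ultimately show ?case using w by simp
qed

lemma cum_mod: "q_cumulative q (map (\<lambda>x. x mod q) v) = q_cumulative q v"
  unfolding cum_ok using ok_cong[of 0 q 0 "map (\<lambda>x. x mod q) v" v] by simp

fun merge :: "bool list \<Rightarrow> nat list \<Rightarrow> nat list" where
  "merge [] u = []"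
| "merge (True#b) u = 0 # merge b u"
| "merge (False#b) [] = []"
| "merge (False#b) (x#u) = x # merge b u"

lemma merge_filter: "count (mset b) False = length u \<Longrightarrow> 0 \<notin> set u \<Longrightarrow> filter (\<lambda>x. x \<noteq> 0) (merge b u) = u"
  by (induction b u rule: merge.induct) auto

lemma merge_map: "count (mset b) False = length u \<Longrightarrow> 0 \<notin> set u \<Longrightarrow> map (\<lambda>x. x = 0) (merge b u) = b"
  by (induction b u rule: merge.induct) auto

lemma merge_mset: "count (mset b) False = length u \<Longrightarrow> mset (merge b u) = mset u + replicate_mset (count (mset b) True) 0"
  by (induction b u rule: merge.induct) auto

lemma merge_ok: "count (mset b) False = length u \<Longrightarrow> \<not> q dvd s \<Longrightarrow> ok q s (merge b u) = ok q s u"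
  by (induction b u arbitrary: s rule: merge.induct) auto

lemma merge_inv: "merge (map (\<lambda>x. x = 0) v) (filter (\<lambda>x. x \<noteq> 0) v) = v"
  by (induction v) auto


lemma card_B:
  "card {b. mset b = replicate_mset k True + replicate_mset n False} = (n + k) choose k"
proof -
  let ?A = "replicate_mset k True + replicate_mset n False"
  have a: "card (permutations_of_multiset ?A) * PF ?A = fact (size ?A)"
    unfolding PF_def by (rule card_permutations_of_multiset_aux)
  have "PF ?A = (\<Prod>x\<in>{True,False}. fact (count ?A x))"
    unfolding PF_def by (rule prod.mono_neutral_left) auto
  also have "\<dots> = fact k * fact n" by simp
  finally have pf: "PF ?A = fact k * fact n" .
  have b: "fact k * fact (n + k - k) * ((n + k) choose k) = (fact (n + k) :: nat)"
    by (rule binomial_fact_lemma) simp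
  have "card (permutations_of_multiset ?A) * (fact k * fact n) = ((n + k) choose k) * (fact k * fact n)"
    using a pf b by (simp add: ac_simps)
  then have "card (permutations_of_multiset ?A) = (n + k) choose k" by simp
  moreover have "permutations_of_multiset ?A = {b. mset b = ?A}"
    by (auto simp: permutations_of_multiset_def)
  ultimately show ?thesis by simp
qed

lemma image_eq0_mset: "0 \<notin># mu \<Longrightarrow> image_mset (\<lambda>x::nat. x = 0) mu = replicate_mset (size mu) False"
  by (induction mu) auto

lemma zeros_count:
  assumes mu0: "0 \<notin># mu"
  shows "card {v. mset v = replicate_mset k 0 + mu \<and> q_cumulative q v}
       = card {u. mset u = mu \<and> q_cumulative q u} * ((size mu + k - 1) choose k)"
proof (cases "size mu = 0")
  case True
  then have mu: "mu = {#}" by simp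
  have "{u. mset u = mu \<and> q_cumulative q u} = {}" using mu by (auto simp: cum_ok)
  moreover have "{v. mset v = replicate_mset k 0 + mu \<and> q_cumulative q v} = {}"
  proof -
    have "\<not> q_cumulative q v" if "mset v = replicate_mset k 0" for v
    proof (cases v)
      case (Cons x xs)
      then have "x = 0" using that by (metis in_replicate_mset list.set_intros(1) set_mset_mset)
      then show ?thesis using Cons by (simp add: cum_ok)
    qed (simp add: cum_ok)
    then show ?thesis using mu by auto
  qed
  ultimately show ?thesis by (metis card.empty mult_is_0)
next
  case False
  define m where "m = size mu"
  have m1: "m \<ge> 1" using False m_def by linarith
  define W where "W = {u. mset u = mu \<and> q_cumulative q u}"
  define B where "B = {b. mset b = replicate_mset k True + replicate_mset (m - 1) False}"
  define V where "V = {v. mset v = replicate_mset k 0 + mu \<and> q_cumulative q v}"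
  let ?f = "\<lambda>(u, b). merge (False # b) u"
  let ?g = "\<lambda>v. (filter (\<lambda>x. x \<noteq> 0) v, tl (map (\<lambda>x. x = 0) v))"
  have bij: "bij_betw ?f (W \<times> B) V"
  proof (rule bij_betw_byWitness[where f' = ?g])
    show "\<forall>a\<in>W \<times> B. ?g (?f a) = a"
    proof
      fix a assume "a \<in> W \<times> B"
      then obtain u b where a: "a = (u, b)" "mset u = mu" "mset b = replicate_mset k True + replicate_mset (m - 1) False"
        unfolding W_def B_def by auto
      have lu: "length u = m" using a(2) m_def by (metis size_mset)
      have cf: "count (mset (False # b)) False = length u" using a(3) lu m1 by simp
      have u0: "0 \<notin> set u" using a(2) mu0 by (metis set_mset_mset)
      show "?g (?f a) = a" using merge_filter[OF cf u0] merge_map[OF cf u0] a(1) by simp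
    qed
    show "\<forall>a'\<in>V. ?f (?g a') = a'"
    proof
      fix v assume "v \<in> V"
      then have v: "mset v = replicate_mset k 0 + mu" "q_cumulative q v" unfolding V_def by auto
      then obtain x v' where xv: "v = x # v'" "\<not> q dvd x" by (cases v) (auto simp: cum_ok)
      then have "x \<noteq> 0" by (metis dvd_0_right)
      then have "map (\<lambda>x. x = 0) v = False # tl (map (\<lambda>x. x = 0) v)" using xv by simp
      then show "?f (?g v) = v" using merge_inv[of v] by (metis (no_types, lifting) case_prod_conv)
    qed
    show "?f ` (W \<times> B) \<subseteq> V"
    proof
      fix y assume "y \<in> ?f ` (W \<times> B)"
      then obtain u b where y: "y = merge (False # b) u" "mset u = mu" "q_cumulative q u"
         "mset b = replicate_mset k True + replicate_mset (m - 1) False"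
        unfolding W_def B_def by auto
      have lu: "length u = m" using y(2) m_def by (metis size_mset)
      have cf: "count (mset (False # b)) False = length u" using y(4) lu m1 by simp
      obtain x u' where xu: "u = x # u'" "\<not> q dvd x" "ok q x u'" using y(3) by (cases u) (auto simp: cum_ok)
      have cf': "count (mset b) False = length u'" using cf xu by simp
      have "mset y = mset u + replicate_mset k 0" using merge_mset[OF cf] y(1,4) by simp
      moreover have "ok q 0 y" using xu y(1) merge_ok[OF cf' xu(2)] by simp
      moreover have "y \<noteq> []" using xu y(1) by simp
      ultimately show "y \<in> V" unfolding V_def using y(2) by (simp add: cum_ok add.commute)
    qed
    show "?g ` V \<subseteq> W \<times> B"
    proof
      fix z assume "z \<in> ?g ` V"
      then obtain v where z: "z = ?g v" "mset v = replicate_mset k 0 + mu" "q_cumulative q v"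
        unfolding V_def by auto
      then obtain x v' where xv: "v = x # v'" "\<not> q dvd x" "ok q x v'" by (cases v) (auto simp: cum_ok)
      then have x0: "x \<noteq> 0" by (metis dvd_0_right)
      have r0: "filter_mset (\<lambda>x::nat. x \<noteq> 0) (replicate_mset k 0) = {#}"
      proof -
        have "filter_mset (\<lambda>x::nat. x \<noteq> 0) (replicate_mset k 0) = filter_mset (\<lambda>_. False) (replicate_mset k 0)"
          by (rule filter_mset_cong0) (simp split: if_splits)
        then show ?thesis by (simp only: filter_mset_False)
      qed
      have r1: "filter_mset (\<lambda>x. x \<noteq> 0) mu = mu"
      proof -
        have "filter_mset (\<lambda>x::nat. x \<noteq> 0) mu = filter_mset (\<lambda>_. True) mu"
          by (rule filter_mset_cong0) (metis mu0 gr0I)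
        then show ?thesis by simp
      qed
      have f1: "mset (filter (\<lambda>x. x \<noteq> 0) v) = mu"
        unfolding mset_filter z(2) filter_union_mset r0 r1 by simp
      have cf'': "count (mset (map (\<lambda>x. x = 0) v')) False = length (filter (\<lambda>x. x \<noteq> 0) v')"
      proof -
        have "count (mset (map (\<lambda>x. x = 0) v')) False = length (filter (\<lambda>x. \<not> (x = 0)) v')"
          by (induction v') auto
        then show ?thesis by simp
      qed
      have "ok q x v' = ok q x (filter (\<lambda>x. x \<noteq> 0) v')"
        using merge_ok[OF cf'' xv(2)] merge_inv[of v'] by simp
      then have "q_cumulative q (filter (\<lambda>x. x \<noteq> 0) v)" using xv x0 by (simp add: cum_ok)
      then have w: "filter (\<lambda>x. x \<noteq> 0) v \<in> W" using f1 unfolding W_def by simp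
      have "mset (map (\<lambda>x. x = 0) v) = image_mset (\<lambda>x. x = 0) (replicate_mset k 0 + mu)"
        using z(2) by simp
      also have "\<dots> = replicate_mset k True + replicate_mset m False"
        using image_eq0_mset[OF mu0] m_def by simp
      finally have "add_mset False (mset (map (\<lambda>x. x = 0) v')) = replicate_mset k True + replicate_mset m False"
        using xv x0 by simp
      moreover have "replicate_mset m False = add_mset False (replicate_mset (m - 1) False)"
        using m1 by (cases m) auto
      ultimately have "mset (map (\<lambda>x. x = 0) v') = replicate_mset k True + replicate_mset (m - 1) False"
        by simp
      then have "tl (map (\<lambda>x. x = 0) v) \<in> B" unfolding B_def using xv by simp
      then show "z \<in> W \<times> B" using w z(1) by simp
    qed
  qed
  have fW: "finite W" unfolding W_def
    by (rule finite_subset[of _ "permutations_of_multiset mu"]) (auto intro: permutations_of_multisetI)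
  have fB: "finite B" unfolding B_def
    by (rule finite_subset[of _ "permutations_of_multiset _"]) (auto intro: permutations_of_multisetI)
  have "card V = card W * card B" using bij_betw_same_card[OF bij] fW fB by (simp add: card_cartesian_product)
  also have "card B = (m - 1 + k) choose k" unfolding B_def by (rule card_B)
  finally show ?thesis unfolding V_def W_def m_def using m1 m_def by (simp add: add.commute add_diff_eq[symmetric])
qed


lemma count_mu_of: "count (mu_of q r) y = (if y \<in> {1..q-1} then r y else 0)"
proof -
  have "count (mu_of q r) y = (\<Sum>i\<in>{1..q-1}. count (replicate_mset (r i) i) y)"
    unfolding mu_of_def by (rule count_sum)
  also have "\<dots> = (\<Sum>i\<in>{1..q-1}. if i = y then r y else 0)"
    by (rule sum.cong) auto
  also have "\<dots> = (if y \<in> {1..q-1} then r y else 0)"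
    by (simp add: sum.delta')
  finally show ?thesis .
qed

lemma count_img_mod:
  assumes q: "q \<ge> 1" and y: "y < q"
  shows "count (image_mset (\<lambda>x. x mod q) (mset L)) y = rj q y L"
proof -
  have "count (image_mset (\<lambda>x. x mod q) (mset L)) y = (\<Sum>x\<in>(\<lambda>x. x mod q) -` {y} \<inter> set_mset (mset L). count (mset L) x)"
    by (rule count_image_mset)
  also have "(\<lambda>x. x mod q) -` {y} \<inter> set_mset (mset L) = {i\<in>set L. i mod q = y mod q}"
    using y by auto
  finally show ?thesis unfolding rj_def nmult_def by simp
qed

lemma count_img_big:
  fixes q y :: nat and L :: "nat list"
  assumes q: "q \<ge> 1" and y: "y \<ge> q"
  shows "count (image_mset (\<lambda>x. x mod q) (mset L)) y = 0"
proof -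
  have "x mod q \<noteq> y" for x
  proof -
    have "x mod q < q" by (rule mod_less_divisor) (use q in linarith)
    then show ?thesis using y by simp
  qed
  then have "y \<notin># image_mset (\<lambda>x. x mod q) (mset L)" by auto
  then show ?thesis by (simp add: count_eq_zero_iff)
qed

lemma img_decomp:
  assumes q: "q \<ge> 1"
  shows "image_mset (\<lambda>x. x mod q) (mset L) = replicate_mset (rj q 0 L) 0 + mu_of q (rvec q L)"
proof (rule multiset_eqI)
  fix y
  show "count (image_mset (\<lambda>x. x mod q) (mset L)) y = count (replicate_mset (rj q 0 L) 0 + mu_of q (rvec q L)) y"
  proof (cases "y < q")
    case True
    then show ?thesis using q count_img_mod[OF q True, of L]
      by (auto simp: count_mu_of rvec_def)
  next
    case False
    then show ?thesis using q count_img_big[OF q, of y L]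
      by (auto simp: count_mu_of)
  qed
qed

theorem proposition1:
  fixes q :: nat and lam :: "nat list"
  assumes "q \<ge> 1" and "is_partition lam"
  shows "real (c_count q lam) =
           real (card (W_set q (rvec q lam)))
           * (real (\<Prod>i\<in>{0..q-1}. fact (rj q i lam) :: nat) / real (\<Prod>s\<in>set lam. fact (nmult s lam) :: nat))
           * real ((length lam - 1) choose (rj q 0 lam))
       \<and> (c_count q lam \<noteq> 0 \<longleftrightarrow> W_set q (rvec q lam) \<noteq> {})"
proof -
  have q: "q \<ge> 1" by fact
  let ?g = "\<lambda>x::nat. x mod q"
  let ?mu = "mu_of q (rvec q lam)"
  let ?r0 = "rj q 0 lam"
  let ?W = "W_set q (rvec q lam)"
  define Pg where "Pg = (\<Prod>i\<in>{0..q-1}. fact (rj q i lam) :: nat)"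
  define PN where "PN = (\<Prod>s\<in>set lam. fact (nmult s lam) :: nat)"
  define C where "C = (length lam - 1) choose ?r0"
  have c1: "c_count q lam = card {w. mset w = mset lam \<and> q_cumulative q (map ?g w)}"
    unfolding c_count_def rearr_def by (simp add: cum_mod)
  have dec: "image_mset ?g (mset lam) = replicate_mset ?r0 0 + ?mu" by (rule img_decomp[OF q])
  have fc: "c_count q lam * PF (mset lam) = card {v. mset v = replicate_mset ?r0 0 + ?mu \<and> q_cumulative q v} * PF (image_mset ?g (mset lam))"
    unfolding c1 using fiber_count[of "mset lam" "q_cumulative q" ?g] dec by simp
  have PN: "PF (mset lam) = PN" unfolding PF_def PN_def nmult_def by simp
  have sub: "set_mset (image_mset ?g (mset lam)) \<subseteq> {0..q-1}"
    using q by auto (metis Suc_le_eq Suc_pred le_simps(2) mod_less_divisor not_one_le_zero zero_less_iff_neq_zero)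
  have "PF (image_mset ?g (mset lam)) = (\<Prod>i\<in>{0..q-1}. fact (count (image_mset ?g (mset lam)) i))"
    unfolding PF_def
  proof (rule prod.mono_neutral_left)
    show "\<forall>i\<in>{0..q - 1} - set_mset (image_mset ?g (mset lam)). fact (count (image_mset ?g (mset lam)) i) = 1"
    proof
      fix i assume "i \<in> {0..q - 1} - set_mset (image_mset ?g (mset lam))"
      then have "i \<notin># image_mset ?g (mset lam)" by blast
      then have "count (image_mset ?g (mset lam)) i = 0" by (simp only: not_in_iff)
      then show "fact (count (image_mset ?g (mset lam)) i) = 1" by simp
    qed
  qed (use sub in auto)
  also have "\<dots> = Pg" unfolding Pg_def
  proof (rule prod.cong)
    fix i assume "i \<in> {0..q-1}"
    then have "i < q" using q by auto
    then show "fact (count (image_mset ?g (mset lam)) i) = fact (rj q i lam)"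
      using count_img_mod[OF q, of i lam] by simp
  qed simp
  finally have Pg: "PF (image_mset ?g (mset lam)) = Pg" .
  have mu0: "0 \<notin># ?mu" using count_mu_of[of q "rvec q lam" 0] by (simp add: count_eq_zero_iff)
  have sz: "size ?mu + ?r0 = length lam"
    using arg_cong[OF dec, of size] by simp
  have zc: "card {v. mset v = replicate_mset ?r0 0 + ?mu \<and> q_cumulative q v} = card ?W * C"
    unfolding C_def W_set_def using zeros_count[OF mu0, of ?r0 q] sz by (simp add: add.commute)
  have main: "c_count q lam * PN = card ?W * C * Pg" using fc PN Pg zc by simp
  have PNpos: "PN > 0" unfolding PN_def by (simp add: prod_pos)
  have Pgpos: "Pg > 0" unfolding Pg_def by (simp add: prod_pos)
  have eq1: "real (c_count q lam) = real (card ?W) * (real Pg / real PN) * real C"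
  proof -
    have "real (c_count q lam) * real PN = real (card ?W) * real C * real Pg"
      using arg_cong[OF main, of real] by simp
    then show ?thesis using PNpos by (simp add: field_simps)
  qed
  have finW: "finite ?W" unfolding W_set_def
    by (rule finite_subset[of _ "permutations_of_multiset ?mu"]) (auto intro: permutations_of_multisetI)
  have eq2: "c_count q lam \<noteq> 0 \<longleftrightarrow> ?W \<noteq> {}"
  proof
    assume "c_count q lam \<noteq> 0"
    then have "card ?W \<noteq> 0" using main PNpos by (metis mult_eq_0_iff neq0_conv)
    then show "?W \<noteq> {}" by auto
  next
    assume "?W \<noteq> {}"
    then obtain u where u: "mset u = ?mu" "q_cumulative q u" unfolding W_set_def by auto
    then have "u \<noteq> []" by (simp add: cum_ok)
    then have "size ?mu \<ge> 1" using u(1) by (metis One_nat_def Suc_leI length_greater_0_conv size_mset)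
    then have "C > 0" unfolding C_def using sz by simp
    moreover have "card ?W > 0" using \<open>?W \<noteq> {}\<close> finW by (simp add: card_gt_0_iff)
    ultimately show "c_count q lam \<noteq> 0" using main Pgpos PNpos by (metis mult_eq_0_iff not_gr0)
  qed
  show ?thesis using eq1 eq2 unfolding Pg_def PN_def C_def by simp
qed

end
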